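(* For every $n\geq 1$, $$\sum_{T\in \mathcal P_n}t^{\mathrm{eld}(T)}\prod_{i=1}^{n}x_i^{\mathrm{young}_T(i)}=\prod_{k=0}^{n-2}(x_1+\cdots+x_n+kt).$$
   Context: All trees are rooted trees whose vertices are labeled by distinct positive integers. A vertex $j$ is a descendant of $i$ if the path from the root to $j$ passes through $i$ (every vertex is a descendant of itself); $\beta_T(i)$ is the smallest descendant of $i$. A child of $i$ is a descendant joined to $i$ by an edge; children of the same vertex are brothers. A plane tree is a rooted tree in which the children of each vertex are linearly ordered (left to right). In a plane tree $T$, a vertex $j$ is elder if it has a brother $k$ to its right with $\beta_T(k)<\beta_T(j)$. $\mathrm{eld}_T(v)$ is the number of elder children of $v$, $\mathrm{eld}(T)$ the total number of elder vertices, $\deg_T(v)$ the number of children of $v$, and $\mathrm{young}_T(v)=\deg_T(v)-\mathrm{eld}_T(v)$. $\mathcal P_n$ is the set of all plane trees on vertex set $[n]=\{1,\dots,n\}$ (any root). The empty product equals $1$. *)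

theory Defs
  imports Main
begin

text \<open>A plane tree on vertex set {1..n} is encoded by its root r and a function ch
  giving, for each vertex, the left-to-right list of its children
  (ch v = [] for v outside {1..n}).\<close>

definition edges :: "(nat \<Rightarrow> nat list) \<Rightarrow> (nat \<times> nat) set" where
  "edges ch = {(v, c). c \<in> set (ch v)}"

definition is_plane_tree :: "nat \<Rightarrow> nat \<Rightarrow> (nat \<Rightarrow> nat list) \<Rightarrow> bool" where
  "is_plane_tree n r ch \<longleftrightarrow>
     r \<in> {1..n} \<and>
     (\<forall>v. v \<notin> {1..n} \<longrightarrow> ch v = []) \<and>
     (\<forall>v. distinct (ch v) \<and> set (ch v) \<subseteq> {1..n}) \<and>
     (\<forall>v. r \<notin> set (ch v)) \<and>
     (\<forall>c \<in> {1..n} - {r}. \<exists>!v. c \<in> set (ch v)) \<and>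
     (\<forall>j \<in> {1..n}. (r, j) \<in> (edges ch)\<^sup>*)"

definition plane_trees :: "nat \<Rightarrow> (nat \<times> (nat \<Rightarrow> nat list)) set" where
  "plane_trees n = {(r, ch). is_plane_tree n r ch}"

definition beta :: "(nat \<Rightarrow> nat list) \<Rightarrow> nat \<Rightarrow> nat" where
  "beta ch i = Min {j. (i, j) \<in> (edges ch)\<^sup>*}"

definition eld_v :: "(nat \<Rightarrow> nat list) \<Rightarrow> nat \<Rightarrow> nat" where
  "eld_v ch v = card {p. p < length (ch v) \<and>
      (\<exists>q. p < q \<and> q < length (ch v) \<and> beta ch (ch v ! q) < beta ch (ch v ! p))}"

definition deg_v :: "(nat \<Rightarrow> nat list) \<Rightarrow> nat \<Rightarrow> nat" where
  "deg_v ch v = length (ch v)"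

definition young_v :: "(nat \<Rightarrow> nat list) \<Rightarrow> nat \<Rightarrow> nat" where
  "young_v ch v = deg_v ch v - eld_v ch v"

definition eld :: "nat \<Rightarrow> (nat \<Rightarrow> nat list) \<Rightarrow> nat" where
  "eld n ch = (\<Sum>v\<in>{1..n}. eld_v ch v)"

end

theory Submission
  imports Defs
begin

definition istree :: "nat set \<Rightarrow> nat \<Rightarrow> (nat \<Rightarrow> nat list) \<Rightarrow> bool" where
  "istree S r ch \<longleftrightarrow>
     r \<in> S \<and>
     (\<forall>v. v \<notin> S \<longrightarrow> ch v = []) \<and>
     (\<forall>v. distinct (ch v) \<and> set (ch v) \<subseteq> S) \<and>
     (\<forall>v. r \<notin> set (ch v)) \<and>
     (\<forall>c \<in> S - {r}. \<exists>!v. c \<in> set (ch v)) \<and>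
     (\<forall>j \<in> S. (r, j) \<in> (edges ch)\<^sup>*)"

lemma is_plane_tree_istree: "is_plane_tree n r ch = istree {1..n} r ch"
  unfolding is_plane_tree_def istree_def by simp

lemma edges_iff[simp]: "(v, c) \<in> edges ch \<longleftrightarrow> c \<in> set (ch v)"
  by (simp add: edges_def)

lemma edge_in:
  assumes "istree S r ch" "(v, c) \<in> edges ch"
  shows "c \<in> S" "v \<in> S" "c \<noteq> r"
  using assms unfolding istree_def by auto

lemma reach_in:
  assumes "istree S r ch" "(a, j) \<in> (edges ch)\<^sup>*"
  shows "j = a \<or> j \<in> S"
  using assms(2) by (induction rule: rtrancl_induct) (use assms(1) in \<open>auto simp: istree_def\<close>)

lemma parent_unique:
  assumes "istree S r ch" "c \<in> set (ch v)" "c \<in> set (ch w)"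
  shows "v = w"
proof -
  have "c \<in> S - {r}" using edge_in[OF assms(1), of v c] assms(2) by auto
  then show ?thesis using assms unfolding istree_def by metis
qed

lemma no_cycle_aux:
  assumes "istree S r ch" "(r, j) \<in> (edges ch)\<^sup>*"
  shows "(j, j) \<notin> (edges ch)\<^sup>+"
  using assms(2)
proof (induction rule: rtrancl_induct)
  case base
  show ?case
  proof
    assume "(r, r) \<in> (edges ch)\<^sup>+"
    then obtain z where "(z, r) \<in> edges ch" using tranclD2 by metis
    then show False using edge_in[OF assms(1)] by blast
  qed
next
  case (step y j)
  show ?case
  proof
    assume "(j, j) \<in> (edges ch)\<^sup>+"
    then obtain z where z: "(j, z) \<in> (edges ch)\<^sup>*" "(z, j) \<in> edges ch" using tranclD2 by metis
    have "z = y" using parent_unique[OF assms(1)] z(2) step(2) by simp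
    then have "(y, y) \<in> (edges ch)\<^sup>+" using step(2) z(1) by (meson rtrancl_into_trancl2)
    then show False using step(3) by blast
  qed
qed

lemma no_cycle:
  assumes "istree S r ch"
  shows "(v, v) \<notin> (edges ch)\<^sup>+"
proof
  assume a: "(v, v) \<in> (edges ch)\<^sup>+"
  then obtain z where "(v, z) \<in> edges ch" using tranclD by metis
  then have "v \<in> S" using edge_in[OF assms] by blast
  then have "(r, v) \<in> (edges ch)\<^sup>*" using assms unfolding istree_def by blast
  then show False using no_cycle_aux[OF assms] a by blast
qed

lemma anc_comparable:
  assumes "istree S r ch" "(a, j) \<in> (edges ch)\<^sup>*" "(c, j) \<in> (edges ch)\<^sup>*"
  shows "(a, c) \<in> (edges ch)\<^sup>* \<or> (c, a) \<in> (edges ch)\<^sup>*"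
  using assms(2,3)
proof (induction arbitrary: c rule: rtrancl_induct)
  case base
  then show ?case by blast
next
  case (step y j)
  show ?case
  proof (cases "c = j")
    case True
    then show ?thesis using step(1,2) by (meson edges_iff rtrancl.rtrancl_into_rtrancl)
  next
    case False
    then obtain z where z: "(c, z) \<in> (edges ch)\<^sup>*" "(z, j) \<in> edges ch"
      using step(4) by (metis rtranclE)
    have "z = y" using parent_unique[OF assms(1)] z(2) step(2) by simp
    then show ?thesis using step(3) z(1) by blast
  qed
qed

lemma siblings_disjoint:
  assumes "istree S r ch" "a \<in> set (ch v)" "c \<in> set (ch v)" "a \<noteq> c"
    "(a, j) \<in> (edges ch)\<^sup>*" "(c, j) \<in> (edges ch)\<^sup>*"
  shows False
proof -
  have *: False if h: "a' \<in> set (ch v)" "c' \<in> set (ch v)" "a' \<noteq> c'" "(a', c') \<in> (edges ch)\<^sup>*" for a' c'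
  proof -
    obtain z where z: "(a', z) \<in> (edges ch)\<^sup>*" "(z, c') \<in> edges ch"
      using h(3,4) by (metis rtranclE)
    have "z = v" using parent_unique[OF assms(1)] z(2) h(2) by simp
    then have "(v, v) \<in> (edges ch)\<^sup>+" using h(1) z(1) by (meson edges_iff rtrancl_into_trancl2)
    then show False using no_cycle[OF assms(1)] by blast
  qed
  from anc_comparable[OF assms(1,5,6)] show False
    using *[of a c] *[of c a] assms(2,3,4) by auto
qed

lemma leaf_below:
  assumes "istree S r ch" "finite S"
  shows "\<exists>l. (a, l) \<in> (edges ch)\<^sup>* \<and> ch l = []"
proof (induction "card {j. (a, j) \<in> (edges ch)\<^sup>*}" arbitrary: a rule: less_induct)
  case less
  show ?case
  proof (cases "ch a = []")
    case True then show ?thesis by blast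
  next
    case False
    then obtain c where c: "c \<in> set (ch a)" by (cases "ch a") auto
    have fin: "finite {j. (a, j) \<in> (edges ch)\<^sup>*}"
      by (rule finite_subset[of _ "insert a S"]) (use reach_in[OF assms(1)] assms(2) in auto)
    have sub: "{j. (c, j) \<in> (edges ch)\<^sup>*} \<subseteq> {j. (a, j) \<in> (edges ch)\<^sup>*}"
      using c by (auto intro: converse_rtrancl_into_rtrancl)
    have "a \<notin> {j. (c, j) \<in> (edges ch)\<^sup>*}"
    proof
      assume "a \<in> {j. (c, j) \<in> (edges ch)\<^sup>*}"
      then have "(a, a) \<in> (edges ch)\<^sup>+" using c by (meson edges_iff mem_Collect_eq rtrancl_into_trancl2)
      then show False using no_cycle[OF assms(1)] by blast
    qed
    then have "{j. (c, j) \<in> (edges ch)\<^sup>*} \<subset> {j. (a, j) \<in> (edges ch)\<^sup>*}" using sub by auto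
    then have "card {j. (c, j) \<in> (edges ch)\<^sup>*} < card {j. (a, j) \<in> (edges ch)\<^sup>*}"
      using fin by (meson psubset_card_mono)
    then obtain l where "(c, l) \<in> (edges ch)\<^sup>*" "ch l = []" using less by blast
    then show ?thesis using c by (meson converse_rtrancl_into_rtrancl edges_iff)
  qed
qed


definition rm :: "nat \<Rightarrow> (nat \<Rightarrow> nat list) \<Rightarrow> (nat \<Rightarrow> nat list)" where
  "rm l ch = (\<lambda>v. filter (\<lambda>y. y \<noteq> l) (ch v))"

lemma rm_reach:
  assumes "istree S r ch" "ch l = []" "a \<noteq> l"
  shows "(a, j) \<in> (edges (rm l ch))\<^sup>* \<longleftrightarrow> (a, j) \<in> (edges ch)\<^sup>* \<and> j \<noteq> l"
proof
  assume "(a, j) \<in> (edges (rm l ch))\<^sup>*"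
  then show "(a, j) \<in> (edges ch)\<^sup>* \<and> j \<noteq> l"
    by (induction rule: rtrancl_induct) (auto simp: rm_def assms(3) intro: rtrancl.rtrancl_into_rtrancl)
next
  assume "(a, j) \<in> (edges ch)\<^sup>* \<and> j \<noteq> l"
  then have "(a, j) \<in> (edges ch)\<^sup>*" "j \<noteq> l" by auto
  then show "(a, j) \<in> (edges (rm l ch))\<^sup>*"
  proof (induction rule: rtrancl_induct)
    case base then show ?case by simp
  next
    case (step y z)
    have "y \<noteq> l" using step(2) assms(2) by auto
    then show ?case using step by (auto simp: rm_def intro: rtrancl.rtrancl_into_rtrancl)
  qed
qed

lemma rm_tree:
  assumes "istree S r ch" "ch l = []" "l \<in> S" "l \<noteq> r"
  shows "istree (S - {l}) r (rm l ch)"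
proof -
  have r: "(r, j) \<in> (edges (rm l ch))\<^sup>*" if "j \<in> S - {l}" for j
    using rm_reach[OF assms(1,2)] assms(4) that assms(1) unfolding istree_def by auto
  show ?thesis using assms(1,2,4) r unfolding istree_def rm_def by auto
qed

lemma ins_tree:
  assumes "istree (S - {l}) r ch" "l \<in> S" "p \<in> S - {l}" "i \<le> length (ch p)"
  shows "istree S r (ch(p := take i (ch p) @ l # drop i (ch p)))" (is "istree S r ?ch")

proof -
  have nl: "l \<notin> set (ch v)" for v using assms(1) unfolding istree_def by auto
  have sub: "edges ch \<subseteq> edges ?ch"
  proof
    fix e assume "e \<in> edges ch"
    then obtain v c where e: "e = (v, c)" "c \<in> set (ch v)" by (cases e) auto
    show "e \<in> edges ?ch"
    proof (cases "v = p")
      case True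
      have "c \<in> set (take i (ch p)) \<or> c \<in> set (drop i (ch p))" using e True
        by (metis Un_iff append_take_drop_id set_append)
      then show ?thesis using e True by (auto simp: edges_def)
    qed (use e in \<open>auto simp: edges_def\<close>)
  qed
  have "(r, p) \<in> (edges ch)\<^sup>*" using assms(1,3) unfolding istree_def by auto
  then have rp: "(r, p) \<in> (edges ?ch)\<^sup>*" using rtrancl_mono[OF sub] by auto
  have rl: "(r, l) \<in> (edges ?ch)\<^sup>*"
    by (rule rtrancl.rtrancl_into_rtrancl[OF rp]) (simp add: edges_def)
  have reach: "(r, j) \<in> (edges ?ch)\<^sup>*" if "j \<in> S" for j
  proof (cases "j = l")
    case True then show ?thesis using rl by simp
  next
    case False
    then have "(r, j) \<in> (edges ch)\<^sup>*" using assms(1) that unfolding istree_def by auto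
    then show ?thesis using rtrancl_mono[OF sub] by auto
  qed
  have setch: "set (?ch v) = (if v = p then insert l (set (ch p)) else set (ch v))" for v
  proof (cases "v = p")
    case True
    have "set (take i (ch p) @ drop i (ch p)) = set (ch p)" by simp
    then have "set (take i (ch p)) \<union> set (drop i (ch p)) = set (ch p)" by (simp only: set_append)
    then show ?thesis using True by auto
  qed simp
  have dist: "distinct (?ch v)" for v
  proof (cases "v = p")
    case True
    have "distinct (ch p)" using assms(1) unfolding istree_def by simp
    then have "set (take i (ch p)) \<inter> set (drop i (ch p)) = {}" "distinct (take i (ch p))" "distinct (drop i (ch p))"
      by (auto simp: set_take_disj_set_drop_if_distinct)
    moreover have "l \<notin> set (take i (ch p))" "l \<notin> set (drop i (ch p))"
      using nl by (auto dest: in_set_takeD in_set_dropD)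
    ultimately show ?thesis using True by auto
  qed (use assms(1) in \<open>auto simp: istree_def\<close>)
  have uniq: "\<exists>!v. c \<in> set (?ch v)" if "c \<in> S - {r}" for c
  proof (cases "c = l")
    case True
    have "l \<in> set (?ch p)" using setch[of p] by simp
    moreover have "w = p" if "l \<in> set (?ch w)" for w
    proof (rule ccontr)
      assume "w \<noteq> p"
      then show False using that setch[of w] nl[of w] by simp
    qed
    ultimately show ?thesis using True by blast
  next
    case False
    then have "c \<in> S - {l} - {r}" using that by auto
    then obtain v where v: "c \<in> set (ch v)" "\<And>w. c \<in> set (ch w) \<Longrightarrow> w = v"
      using assms(1) unfolding istree_def by metis
    have "c \<in> set (?ch w) \<longleftrightarrow> c \<in> set (ch w)" for w using setch[of w] False by simp
    then show ?thesis using v by metis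
  qed
  have "r \<in> S" using assms(1) unfolding istree_def by auto
  moreover have "\<forall>v. v \<notin> S \<longrightarrow> ?ch v = []" using assms(1,3) unfolding istree_def by auto
  moreover have "\<forall>v. distinct (?ch v) \<and> set (?ch v) \<subseteq> S"
    using dist setch assms(1,2,3) unfolding istree_def by auto
  moreover have "\<forall>v. r \<notin> set (?ch v)"
    using setch assms(1) unfolding istree_def by auto
  ultimately show ?thesis unfolding istree_def using uniq reach by blast
qed

lemma rm_ins:
  assumes "istree (S - {l}) r ch"
  shows "rm l (ch(p := take i (ch p) @ l # drop i (ch p))) = ch"
proof -
  have nl: "l \<notin> set (ch v)" for v using assms(1) unfolding istree_def by auto
  have "filter (\<lambda>y. y \<noteq> l) (ch v) = ch v" for v using nl[of v] by (simp add: filter_id_conv) blast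
  moreover have "filter (\<lambda>y. y \<noteq> l) (take i (ch p)) = take i (ch p)"
     "filter (\<lambda>y. y \<noteq> l) (drop i (ch p)) = drop i (ch p)"
    using nl[of p] by (auto simp: filter_id_conv dest: in_set_takeD in_set_dropD)
  ultimately show ?thesis unfolding rm_def by (auto simp: fun_eq_iff)
qed


fun ec :: "(nat \<Rightarrow> nat) \<Rightarrow> nat list \<Rightarrow> nat" where
  "ec f [] = 0"
| "ec f (a # xs) = (if \<exists>b\<in>set xs. f b < f a then 1 else 0) + ec f xs"

lemma ec_card:
  "card {p. p < length xs \<and> (\<exists>q. p < q \<and> q < length xs \<and> f (xs!q) < f (xs!p))} = ec f xs"
proof (induction xs)
  case Nil
  then show ?case by simp
next
  case (Cons a xs)
  let ?A = "{p. p < length xs \<and> (\<exists>q. p < q \<and> q < length xs \<and> f (xs!q) < f (xs!p))}"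
  let ?B = "{p. p < length (a#xs) \<and> (\<exists>q. p < q \<and> q < length (a#xs) \<and> f ((a#xs)!q) < f ((a#xs)!p))}"
  let ?C = "\<exists>b\<in>set xs. f b < f a"
  have e: "?B = (if ?C then {0} else {}) \<union> Suc ` ?A"
  proof (intro set_eqI iffI)
    fix p assume "p \<in> ?B"
    then obtain q where q: "p < length (a#xs)" "p < q" "q < length (a#xs)" "f ((a#xs)!q) < f ((a#xs)!p)" by blast
    then obtain q' where q': "q = Suc q'" by (cases q) auto
    show "p \<in> (if ?C then {0} else {}) \<union> Suc ` ?A"
    proof (cases p)
      case 0
      then have ?C using q q' by (auto simp: in_set_conv_nth) (meson nth_mem)
      then show ?thesis using 0 by simp
    next
      case (Suc p')
      then have "p' \<in> ?A" using q q' by auto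
      then show ?thesis using Suc by blast
    qed
  next
    fix p assume "p \<in> (if ?C then {0} else {}) \<union> Suc ` ?A"
    then show "p \<in> ?B"
    proof
      assume "p \<in> (if ?C then {0} else {})"
      then have "p = 0" ?C by (auto split: if_splits)
      then obtain q where "q < length xs" "f (xs!q) < f a" by (auto simp: in_set_conv_nth)
      then show "p \<in> ?B" using \<open>p = 0\<close> by (auto intro!: exI[of _ "Suc q"])
    next
      assume "p \<in> Suc ` ?A"
      then obtain p' q where "p = Suc p'" "p' < length xs" "p' < q" "q < length xs" "f (xs!q) < f (xs!p')" by blast
      then show "p \<in> ?B" by (auto intro!: exI[of _ "Suc q"])
    qed
  qed
  have fin: "finite ?A" by auto
  have "card ?B = card (if ?C then {0::nat} else {}) + card (Suc ` ?A)"
    unfolding e by (rule card_Un_disjoint) (auto)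
  also have "card (Suc ` ?A) = card ?A" by (simp add: card_image)
  finally show ?case using Cons by simp
qed

lemma ec_le: "ec f xs \<le> length xs"
  by (induction xs) auto

lemma ec_cong:
  "(\<forall>a\<in>set xs. \<forall>b\<in>set xs. f a < f b \<longleftrightarrow> g a < g b) \<Longrightarrow> ec f xs = ec g xs"
  by (induction xs) auto

lemma ec_ins:
  "(\<forall>b \<in> set as \<union> set bs. f b < f l) \<Longrightarrow>
    ec f (as @ l # bs) = ec f (as @ bs) + (if bs = [] then 0 else 1)"
proof (induction as)
  case Nil
  then show ?case by (cases bs) auto
next
  case (Cons a as)
  then have "(\<exists>b\<in>set (as @ l # bs). f b < f a) = (\<exists>b\<in>set (as @ bs). f b < f a)"
    by auto
  then show ?case using Cons by simp
qed

lemma eld_v_ec: "eld_v ch v = ec (beta ch) (ch v)"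
  unfolding eld_v_def by (rule ec_card)

lemma Min_remove:
  assumes "finite D" "a \<in> D" "a \<noteq> l"
  shows "Min D \<noteq> l \<Longrightarrow> Min (D - {l}) = Min D"
    and "Min D = l \<Longrightarrow> Min (D - {l}) > l"
proof -
  have ne: "D - {l} \<noteq> {}" using assms by auto
  have m1: "Min (D - {l}) \<in> D - {l}" using Min_in[OF _ ne] assms(1) by auto
  have m2: "Min D \<le> Min (D - {l})" using m1 assms(1) by auto
  show "Min D \<noteq> l \<Longrightarrow> Min (D - {l}) = Min D"
  proof -
    assume "Min D \<noteq> l"
    then have "Min D \<in> D - {l}" using Min_in assms by auto
    then have "Min (D - {l}) \<le> Min D" using assms(1) by auto
    then show ?thesis using m2 by simp
  qed
  show "Min D = l \<Longrightarrow> Min (D - {l}) > l" using m1 m2 by auto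
qed

definition desc :: "(nat \<Rightarrow> nat list) \<Rightarrow> nat \<Rightarrow> nat set" where
  "desc ch a = {j. (a, j) \<in> (edges ch)\<^sup>*}"

lemma beta_desc: "beta ch a = Min (desc ch a)"
  unfolding beta_def desc_def by simp

lemma desc_finite:
  assumes "istree S r ch" "finite S"
  shows "finite (desc ch a)"
  by (rule finite_subset[of _ "insert a S"]) (use reach_in[OF assms(1)] assms(2) in \<open>auto simp: desc_def\<close>)

lemma a_in_desc: "a \<in> desc ch a" by (simp add: desc_def)

lemma beta_le:
  assumes "istree S r ch" "finite S" "j \<in> desc ch a"
  shows "beta ch a \<le> j"
  using desc_finite[OF assms(1,2)] assms(3) by (simp add: beta_desc)

locale leafctx =
  fixes S r ch l
  assumes tree: "istree S r ch" and fin: "finite S" and lS: "l \<in> S" and lr: "l \<noteq> r"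
    and lleaf: "ch l = []" and lmax: "\<And>v. v \<in> S \<Longrightarrow> ch v = [] \<Longrightarrow> v \<le> l"
begin

lemma desc_rm: "a \<noteq> l \<Longrightarrow> desc (rm l ch) a = desc ch a - {l}"
  unfolding desc_def using rm_reach[OF tree lleaf] by auto

lemma beta_rm: "a \<noteq> l \<Longrightarrow> beta (rm l ch) a = Min (desc ch a - {l})"
  using desc_rm by (simp add: beta_desc)

lemma desc_l: "desc ch l = {l}"
proof -
  have "(l, j) \<in> (edges ch)\<^sup>* \<Longrightarrow> j = l" for j
    by (erule converse_rtranclE) (use lleaf in auto)
  then show ?thesis unfolding desc_def by auto
qed

lemma beta_l: "beta ch l = l"
  using desc_l by (simp add: beta_desc)

lemma beta_lt:
  assumes "a \<in> S" "l \<notin> desc ch a"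
  shows "beta ch a < l"
proof -
  obtain lf where lf: "(a, lf) \<in> (edges ch)\<^sup>*" "ch lf = []" using leaf_below[OF tree fin] by blast
  have "lf \<in> S" using reach_in[OF tree lf(1)] assms(1) by auto
  then have "lf \<le> l" using lmax lf(2) by auto
  moreover have "lf \<noteq> l" using lf(1) assms(2) by (auto simp: desc_def)
  moreover have "beta ch a \<le> lf" using beta_le[OF tree fin] lf(1) by (simp add: desc_def)
  ultimately show ?thesis by simp
qed

lemma sib_cmp:
  assumes "a \<in> set (ch v)" "c \<in> set (ch v)" "a \<noteq> l" "c \<noteq> l"
  shows "beta ch a < beta ch c \<longleftrightarrow> beta (rm l ch) a < beta (rm l ch) c"
proof (cases "a = c")
  case True then show ?thesis by simp
next
  case False
  have aS: "a \<in> S" and cS: "c \<in> S" using assms tree unfolding istree_def by auto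
  have fa: "finite (desc ch a)" and fc: "finite (desc ch c)" using desc_finite[OF tree fin] by auto
  have not_both: "\<not> (l \<in> desc ch a \<and> l \<in> desc ch c)"
    using siblings_disjoint[OF tree assms(1,2) False] unfolding desc_def by blast
  note ba = beta_rm[OF assms(3)] and bc = beta_rm[OF assms(4)]
  have same: "beta (rm l ch) y = beta ch y" if "l \<notin> desc ch y" "y \<noteq> l" for y
    using beta_rm[OF that(2)] that(1) by (simp add: beta_desc)
  show ?thesis
  proof (cases "l \<in> desc ch a")
    case True
    then have nc: "l \<notin> desc ch c" using not_both by blast
    have bcl: "beta ch c < l" using beta_lt[OF cS nc] .
    have sc: "beta (rm l ch) c = beta ch c" using same[OF nc assms(4)] .
    show ?thesis
    proof (cases "beta ch a = l")
      case True
      have "beta (rm l ch) a > l"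
        using Min_remove(2)[OF fa a_in_desc assms(3)] True ba by (simp add: beta_desc)
      then show ?thesis using True bcl sc by simp
    next
      case False
      have "beta (rm l ch) a = beta ch a"
        using Min_remove(1)[OF fa a_in_desc assms(3)] False ba by (simp add: beta_desc)
      then show ?thesis using sc by simp
    qed
  next
    case na: False
    have sa: "beta (rm l ch) a = beta ch a" using same[OF na assms(3)] .
    have bal: "beta ch a < l" using beta_lt[OF aS na] .
    show ?thesis
    proof (cases "l \<in> desc ch c")
      case nc: False
      then show ?thesis using sa same[OF nc assms(4)] by simp
    next
      case True
      show ?thesis
      proof (cases "beta ch c = l")
        case True
        have "beta (rm l ch) c > l"
          using Min_remove(2)[OF fc a_in_desc assms(4)] True bc by (simp add: beta_desc)
        then show ?thesis using True bal sa by simp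
      next
        case False
        have "beta (rm l ch) c = beta ch c"
          using Min_remove(1)[OF fc a_in_desc assms(4)] False bc by (simp add: beta_desc)
        then show ?thesis using sa by simp
      qed
    qed
  qed
qed

lemma sib_l:
  assumes "a \<in> set (ch v)" "l \<in> set (ch v)" "a \<noteq> l"
  shows "beta ch a < beta ch l"
proof -
  have aS: "a \<in> S" using assms tree unfolding istree_def by auto
  have "l \<notin> desc ch a"
    using siblings_disjoint[OF tree assms(1,2,3), of l] unfolding desc_def by auto
  then show ?thesis using beta_lt[OF aS] beta_l by simp
qed

end


definition W :: "(nat \<Rightarrow> 'a::comm_ring_1) \<Rightarrow> 'a \<Rightarrow> nat set \<Rightarrow> (nat \<Rightarrow> nat list) \<Rightarrow> 'a" where
  "W x t S ch = (\<Prod>v\<in>S. t ^ eld_v ch v * x v ^ young_v ch v)"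

context leafctx
begin

lemma weight_rm:
  fixes x :: "nat \<Rightarrow> 'a::comm_ring_1" and t :: 'a
  assumes chp: "ch p = as @ l # bs"
  shows "W x t S ch = W x t (S - {l}) (rm l ch) * (if bs = [] then x p else t)"
proof -
  let ?ch' = "rm l ch"
  let ?g = "\<lambda>c v. t ^ eld_v c v * x v ^ young_v c v"
  have pS: "p \<in> S" using chp tree unfolding istree_def by (metis Nil_is_append_conv list.distinct(1))
  have pl: "p \<noteq> l" using chp lleaf by auto
  have lp: "l \<in> set (ch p)" using chp by simp
  have par: "v = p" if "l \<in> set (ch v)" for v using parent_unique[OF tree that lp] .
  have dist: "distinct (ch p)" using tree unfolding istree_def by auto
  have nab: "l \<notin> set as" "l \<notin> set bs" using dist chp by auto
  have "filter (\<lambda>y. y \<noteq> l) as = as" "filter (\<lambda>y. y \<noteq> l) bs = bs"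
    using nab by (auto simp: filter_id_conv)
  then have rmp: "?ch' p = as @ bs" using chp unfolding rm_def by simp
  have rmv: "?ch' v = ch v" if "v \<noteq> p" for v
    using par[of v] that unfolding rm_def by (auto simp: filter_id_conv)
  have gv: "?g ch v = ?g ?ch' v" if "v \<noteq> p" for v
  proof -
    have "ec (beta ch) (ch v) = ec (beta ?ch') (ch v)"
      by (rule ec_cong) (use sib_cmp par that in blast)
    then have "eld_v ch v = eld_v ?ch' v" using rmv[OF that] by (simp add: eld_v_ec)
    moreover have "deg_v ch v = deg_v ?ch' v" using rmv[OF that] by (simp add: deg_v_def)
    ultimately show ?thesis by (simp add: young_v_def)
  qed
  have e1: "ec (beta ch) (ch p) = ec (beta ch) (as @ bs) + (if bs = [] then 0 else 1)"
    unfolding chp by (rule ec_ins) (use sib_l[of _ p] chp nab in auto)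
  have e2: "ec (beta ch) (as @ bs) = ec (beta ?ch') (as @ bs)"
    by (rule ec_cong) (use sib_cmp[of _ p] chp nab in auto)
  have eldp: "eld_v ch p = eld_v ?ch' p + (if bs = [] then 0 else 1)"
    using e1 e2 rmp by (simp add: eld_v_ec)
  have le: "eld_v ?ch' p \<le> length (as @ bs)" using ec_le[of "beta ?ch'" "as @ bs"] rmp by (simp add: eld_v_ec)
  have gp: "?g ch p = ?g ?ch' p * (if bs = [] then x p else t)"
  proof (cases "bs = []")
    case True
    then have "young_v ch p = young_v ?ch' p + 1"
      using eldp le rmp chp by (simp add: young_v_def deg_v_def)
    then show ?thesis using True eldp by (simp add: algebra_simps)
  next
    case False
    then have "young_v ch p = young_v ?ch' p"
      using eldp le rmp chp by (simp add: young_v_def deg_v_def)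
    then show ?thesis using False eldp by (simp add: algebra_simps)
  qed
  have gl: "?g ch l = 1" using lleaf by (simp add: eld_v_ec young_v_def deg_v_def)
  have "W x t S ch = ?g ch l * (\<Prod>v\<in>S - {l}. ?g ch v)"
    unfolding W_def using fin lS by (simp add: prod.remove)
  also have "(\<Prod>v\<in>S - {l}. ?g ch v) = ?g ch p * (\<Prod>v\<in>S - {l} - {p}. ?g ch v)"
    using fin pS pl by (simp add: prod.remove)
  also have "(\<Prod>v\<in>S - {l} - {p}. ?g ch v) = (\<Prod>v\<in>S - {l} - {p}. ?g ?ch' v)"
    by (rule prod.cong) (use gv in auto)
  also have "W x t (S - {l}) ?ch' = ?g ?ch' p * (\<Prod>v\<in>S - {l} - {p}. ?g ?ch' v)"
    unfolding W_def using fin pS pl by (simp add: prod.remove)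
  ultimately show ?thesis using gl gp by (simp add: algebra_simps)
qed

end


definition PTd :: "nat set \<Rightarrow> (nat \<Rightarrow> nat) \<Rightarrow> (nat \<times> (nat \<Rightarrow> nat list)) set" where
  "PTd S d = {(r, ch). istree S r ch \<and> (\<forall>v. length (ch v) = d v)}"

definition CL :: "nat set \<Rightarrow> nat \<Rightarrow> (nat \<Rightarrow> nat) \<Rightarrow> nat" where
  "CL S m d = card {s. set s \<subseteq> S \<and> length s = m \<and> count_list s = d}"

definition rf :: "'a::comm_ring_1 \<Rightarrow> 'a \<Rightarrow> nat \<Rightarrow> 'a" where
  "rf t y k = (\<Prod>j<k. y + of_nat j * t)"

definition R :: "(nat \<Rightarrow> 'a::comm_ring_1) \<Rightarrow> 'a \<Rightarrow> nat set \<Rightarrow> (nat \<Rightarrow> nat) \<Rightarrow> 'a" where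
  "R x t S d = (\<Prod>v\<in>S. rf t (x v) (d v))"

lemma finite_PT:
  assumes "finite S"
  shows "finite {(r, ch). istree S r ch}"
proof -
  let ?DL = "{xs. set xs \<subseteq> S \<and> length xs \<le> card S}"
  let ?F = "{ch. \<forall>v. (v \<in> S \<longrightarrow> ch v \<in> ?DL) \<and> (v \<notin> S \<longrightarrow> ch v = [])}"
  have fF: "finite ?F"
    by (rule finite_set_of_finite_funs) (use assms finite_lists_length_le in auto)
  have "{(r, ch). istree S r ch} \<subseteq> S \<times> ?F"
  proof clarify
    fix r ch assume t: "istree S r ch"
    have "length (ch v) \<le> card S" for v
    proof -
      have "length (ch v) = card (set (ch v))" using t unfolding istree_def by (simp add: distinct_card)
      also have "\<dots> \<le> card S" using t assms unfolding istree_def by (simp add: card_mono)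
      finally show ?thesis .
    qed
    then show "r \<in> S \<and> ch \<in> ?F" using t unfolding istree_def by auto
  qed
  then show ?thesis using finite_subset fF assms by blast
qed

lemma finite_PTd: "finite S \<Longrightarrow> finite (PTd S d)"
  by (rule finite_subset[OF _ finite_PT]) (auto simp: PTd_def)

lemma edge_sum:
  assumes t: "istree S r ch" and fin: "finite S"
  shows "(\<Sum>v\<in>S. length (ch v)) = card S - 1"
proof -
  have "(\<Sum>v\<in>S. length (ch v)) = (\<Sum>v\<in>S. card (set (ch v)))"
    using t unfolding istree_def by (simp add: distinct_card)
  also have "\<dots> = card (\<Union>v\<in>S. set (ch v))"
  proof (rule card_UN_disjoint[symmetric])
    show "finite S" by fact
    show "\<forall>i\<in>S. finite (set (ch i))" by simp
    show "\<forall>i\<in>S. \<forall>j\<in>S. i \<noteq> j \<longrightarrow> set (ch i) \<inter> set (ch j) = {}"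
      using parent_unique[OF t] by blast
  qed
  also have "(\<Union>v\<in>S. set (ch v)) = S - {r}"
  proof
    show "(\<Union>v\<in>S. set (ch v)) \<subseteq> S - {r}" using t unfolding istree_def by auto
    show "S - {r} \<subseteq> (\<Union>v\<in>S. set (ch v))"
    proof
      fix c assume c: "c \<in> S - {r}"
      then obtain v where v: "c \<in> set (ch v)" using t unfolding istree_def by metis
      then have "v \<in> S" using edge_in(2)[OF t, of v c] by simp
      then show "c \<in> (\<Union>v\<in>S. set (ch v))" using v by blast
    qed
  qed
  also have "card (S - {r}) = card S - 1" using t fin unfolding istree_def by simp
  finally show ?thesis .
qed

lemma count_sum:
  assumes "set s \<subseteq> S" "finite S"
  shows "(\<Sum>v\<in>S. count_list s v) = length s"
  using assms(1)
proof (induction s)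
  case Nil then show ?case by simp
next
  case (Cons a s)
  have "(\<Sum>v\<in>S. count_list (a # s) v) = (\<Sum>v\<in>S. count_list s v + (if a = v then 1 else 0))"
    by (rule sum.cong) auto
  also have "\<dots> = (\<Sum>v\<in>S. count_list s v) + (\<Sum>v\<in>S. if a = v then 1 else 0)"
    by (simp add: sum.distrib)
  also have "(\<Sum>v\<in>S. if a = v then 1 else (0::nat)) = 1" using Cons.prems assms(2) by simp
  finally show ?case using Cons by simp
qed

lemma CL_rec:
  assumes "finite S"
  shows "CL S (Suc m) d = (\<Sum>p\<in>{p\<in>S. 1 \<le> d p}. CL S m (d(p := d p - 1)))"
proof -
  let ?A = "\<lambda>p. {s. set s \<subseteq> S \<and> length s = m \<and> count_list s = d(p := d p - 1)}"
  have eq: "{s. set s \<subseteq> S \<and> length s = Suc m \<and> count_list s = d}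
      = (\<Union>p\<in>{p\<in>S. 1 \<le> d p}. (Cons p) ` ?A p)"
  proof (intro set_eqI iffI)
    fix s assume s: "s \<in> {s. set s \<subseteq> S \<and> length s = Suc m \<and> count_list s = d}"
    then obtain p s' where ps: "s = p # s'" by (cases s) auto
    have "count_list s p = count_list s' p + 1" using ps by simp
    then have "1 \<le> d p" using s by auto
    moreover have "count_list s' = d(p := d p - 1)"
    proof
      fix v show "count_list s' v = (d(p := d p - 1)) v"
        using s ps fun_cong[of "count_list s" d v] by auto
    qed
    ultimately show "s \<in> (\<Union>p\<in>{p\<in>S. 1 \<le> d p}. (Cons p) ` ?A p)" using s ps by auto
  next
    fix s assume "s \<in> (\<Union>p\<in>{p\<in>S. 1 \<le> d p}. (Cons p) ` ?A p)"
    then obtain p s' where p: "p \<in> S" "1 \<le> d p" "s = p # s'" "set s' \<subseteq> S" "length s' = m"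
      "count_list s' = d(p := d p - 1)" by auto
    have "count_list s = d"
    proof
      fix v show "count_list s v = d v" using p fun_cong[OF p(6), of v] by auto
    qed
    then show "s \<in> {s. set s \<subseteq> S \<and> length s = Suc m \<and> count_list s = d}" using p by auto
  qed
  have fA: "finite (?A p)" for p
    by (rule finite_subset[OF _ finite_lists_length_eq[OF assms, of m]]) auto
  have "CL S (Suc m) d = card (\<Union>p\<in>{p\<in>S. 1 \<le> d p}. (Cons p) ` ?A p)"
    unfolding CL_def eq ..
  also have "\<dots> = (\<Sum>p\<in>{p\<in>S. 1 \<le> d p}. card ((Cons p) ` ?A p))"
    by (rule card_UN_disjoint) (use assms fA in auto)
  also have "\<dots> = (\<Sum>p\<in>{p\<in>S. 1 \<le> d p}. CL S m (d(p := d p - 1)))"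
    by (rule sum.cong) (auto simp: CL_def card_image)
  finally show ?thesis .
qed

lemma CL_remove:
  assumes "d l = 0"
  shows "CL S m d = CL (S - {l}) m d"
proof -
  have "{s. set s \<subseteq> S \<and> length s = m \<and> count_list s = d} =
        {s. set s \<subseteq> S - {l} \<and> length s = m \<and> count_list s = d}"
  proof (intro set_eqI iffI)
    fix s assume s: "s \<in> {s. set s \<subseteq> S \<and> length s = m \<and> count_list s = d}"
    then have "count_list s l = 0" using assms by auto
    then have "l \<notin> set s" by (simp add: count_list_0_iff)
    then show "s \<in> {s. set s \<subseteq> S - {l} \<and> length s = m \<and> count_list s = d}" using s by auto
  qed auto
  then show ?thesis unfolding CL_def by simp
qed

lemma R_rec:
  fixes x :: "nat \<Rightarrow> 'a::comm_ring_1"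
  assumes "finite S" "l \<in> S" "d l = 0" "p \<in> S - {l}" "1 \<le> d p"
  shows "R x t S d = R x t (S - {l}) (d(p := d p - 1)) * (x p + of_nat (d p - 1) * t)"
proof -
  let ?g = "\<lambda>v. rf t (x v) (d v)"
  let ?h = "\<lambda>v. rf t (x v) ((d(p := d p - 1)) v)"
  have f1: "finite (S - {l})" using assms(1) by simp
  have "R x t S d = ?g l * prod ?g (S - {l})"
    unfolding R_def by (rule prod.remove[OF assms(1,2)])
  also have "?g l = 1" using assms(3) by (simp add: rf_def)
  also have "prod ?g (S - {l}) = ?g p * prod ?g (S - {l} - {p})"
    by (rule prod.remove[OF f1 assms(4)])
  finally have A: "R x t S d = ?g p * prod ?g (S - {l} - {p})" by simp
  have "R x t (S - {l}) (d(p := d p - 1)) = ?h p * prod ?h (S - {l} - {p})"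
    unfolding R_def by (rule prod.remove[OF f1 assms(4)])
  moreover have "prod ?h (S - {l} - {p}) = prod ?g (S - {l} - {p})"
    by (rule prod.cong) auto
  moreover have "?h p = rf t (x p) (d p - 1)" by simp
  moreover have "rf t (x p) (d p) = rf t (x p) (d p - 1) * (x p + of_nat (d p - 1) * t)"
  proof -
    have s: "rf t (x p) (Suc k) = rf t (x p) k * (x p + of_nat k * t)" for k by (simp add: rf_def)
    have "d p = Suc (d p - 1)" using assms(5) by simp
    then show ?thesis using s[of "d p - 1"] by simp
  qed
  ultimately show ?thesis using A by (simp only: ac_simps)
qed


context leafctx
begin

lemma rm_p:
  assumes "ch p = as @ l # bs"
  shows "rm l ch p = as @ bs"
proof -
  have "distinct (ch p)" using tree unfolding istree_def by auto
  then have nab: "l \<notin> set as" "l \<notin> set bs" using assms by auto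
  have "filter (\<lambda>y. y \<noteq> l) as = as" "filter (\<lambda>y. y \<noteq> l) bs = bs"
    using nab by (auto simp: filter_id_conv)
  then show ?thesis using assms unfolding rm_def by simp
qed

lemma rm_v:
  assumes "l \<in> set (ch p)" "v \<noteq> p"
  shows "rm l ch v = ch v"
proof -
  have "l \<notin> set (ch v)" using parent_unique[OF tree _ assms(1)] assms(2) by blast
  then show ?thesis unfolding rm_def by (auto simp: filter_id_conv)
qed

end

lemma sum_if_last:
  fixes a b :: "'a::comm_ring_1"
  assumes "1 \<le> k"
  shows "(\<Sum>i<k. if i = k - 1 then a else b) = a + of_nat (k - 1) * b"
proof -
  obtain m where k: "k = Suc m" using assms by (cases k) auto
  have "(\<Sum>i<Suc m. if i = m then a else b) = (\<Sum>i<m. if i = m then a else b) + a"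
    by simp
  also have "(\<Sum>i<m. if i = m then a else b) = (\<Sum>i<m. b)" by (rule sum.cong) auto
  finally show ?thesis using k by (simp add: algebra_simps)
qed

lemma tree_single: "istree {a} a (\<lambda>_. [])"
  unfolding istree_def by auto

lemma main_d:
  fixes x :: "nat \<Rightarrow> 'a::comm_ring_1" and t :: 'a
  shows "finite S \<Longrightarrow> S \<noteq> {} \<Longrightarrow>
    (\<Sum>T\<in>PTd S d. W x t S (snd T)) = of_nat (CL S (card S - 1) d) * R x t S d"
proof (induction "card S" arbitrary: S d rule: less_induct)
  case less
  note fin = less.prems(1)
  have cS: "1 \<le> card S" using less.prems card_0_eq by fastforce
  let ?L = "{s. set s \<subseteq> S \<and> length s = card S - 1 \<and> count_list s = d}"
  show ?case
  proof (cases "(\<Sum>v\<in>S. d v) = card S - 1 \<and> (\<forall>v. v \<notin> S \<longrightarrow> d v = 0)")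
    case False
    have "PTd S d = {}"
    proof (rule ccontr)
      assume "PTd S d \<noteq> {}"
      then obtain r ch where rc: "istree S r ch" "\<And>v. length (ch v) = d v"
        unfolding PTd_def by auto
      have "(\<Sum>v\<in>S. d v) = card S - 1" using edge_sum[OF rc(1) fin] rc(2) by simp
      moreover have "\<forall>v. v \<notin> S \<longrightarrow> d v = 0" using rc unfolding istree_def by (metis list.size(3))
      ultimately show False using False by blast
    qed
    moreover have "?L = {}"
    proof (rule ccontr)
      assume "?L \<noteq> {}"
      then obtain s where s: "set s \<subseteq> S" "length s = card S - 1" "count_list s = d" by auto
      have "(\<Sum>v\<in>S. d v) = card S - 1" using count_sum[OF s(1) fin] s by simp
      moreover have "\<forall>v. v \<notin> S \<longrightarrow> d v = 0" using s by (metis count_notin subsetD)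
      ultimately show False using False by blast
    qed
    ultimately show ?thesis unfolding CL_def by (metis card.empty of_nat_0 mult_zero_left sum.empty)
  next
    case True
    then have sumd: "(\<Sum>v\<in>S. d v) = card S - 1" and outd: "\<And>v. v \<notin> S \<Longrightarrow> d v = 0" by auto
    show ?thesis
    proof (cases "card S = 1")
      case True
      then obtain a where Sa: "S = {a}" using card_1_singletonE by blast
      have da: "d a = 0" using sumd Sa by simp
      have d0: "d = (\<lambda>_. 0)"
      proof
        fix v show "d v = 0" using da outd[of v] Sa by (cases "v = a") auto
      qed
      have P: "PTd S d = {(a, \<lambda>_::nat. ([]::nat list))}"
      proof (intro set_eqI iffI)
        fix T assume "T \<in> PTd S d"
        then obtain r ch where T: "T = (r, ch)" "istree S r ch" "\<And>v. length (ch v) = d v"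
          unfolding PTd_def by auto
        have "ch = (\<lambda>_::nat. ([]::nat list))" using T(3) d0 by auto
        moreover have "r = a" using T(2) Sa unfolding istree_def by auto
        ultimately show "T \<in> {(a, \<lambda>_::nat. ([]::nat list))}" using T by simp
      next
        fix T assume "T \<in> {(a, \<lambda>_::nat. ([]::nat list))}"
        then show "T \<in> PTd S d" using tree_single[of a] Sa d0 by (auto simp: PTd_def)
      qed
      have L: "?L = {[]}" using True d0 Sa by (auto simp: fun_eq_iff)
      have "W x t S (\<lambda>_::nat. ([]::nat list)) = 1"
        unfolding W_def by (simp add: eld_v_ec young_v_def deg_v_def)
      moreover have "R x t S d = 1" using d0 by (simp add: R_def rf_def)
      ultimately show ?thesis using P L True by (simp add: CL_def)
    next
      case False
      then have c2: "2 \<le> card S" using cS by simp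
      let ?Z = "{v\<in>S. d v = 0}"
      have Zne: "?Z \<noteq> {}"
      proof
        assume "?Z = {}"
        then have "\<forall>v\<in>S. 1 \<le> d v" by auto
        then have "(\<Sum>v\<in>S. (1::nat)) \<le> (\<Sum>v\<in>S. d v)" by (intro sum_mono) auto
        then show False using sumd cS by simp
      qed
      define l where "l = Max ?Z"
      have finZ: "finite ?Z" using fin by simp
      have lZ: "l \<in> ?Z" unfolding l_def using Max_in[OF finZ Zne] .
      then have lS: "l \<in> S" and dl: "d l = 0" by auto
      have lmax: "v \<le> l" if "v \<in> S" "d v = 0" for v
        unfolding l_def using Max_ge[OF finZ] that by auto
      define S' where "S' = S - {l}"
      have finS': "finite S'" using fin by (simp add: S'_def)
      have cS': "card S' = card S - 1" using lS fin by (simp add: S'_def)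
      have S'ne: "S' \<noteq> {}" using cS' c2 by auto
      define P where "P = {p\<in>S'. 1 \<le> d p}"
      define dp where "dp = (\<lambda>p. d(p := d p - 1))"
      define Sig where "Sig = (SIGMA p:P. SIGMA i:{..<d p}. PTd S' (dp p))"
      define Psi :: "nat \<times> nat \<times> (nat \<times> (nat \<Rightarrow> nat list)) \<Rightarrow> nat \<times> (nat \<Rightarrow> nat list)"
        where "Psi = (\<lambda>(p, i, T). (fst T, (snd T)(p := take i (snd T p) @ l # drop i (snd T p))))"
      define f where "f = (\<lambda>p i. if i = d p - 1 then x p else t)"
      have Psi_simp: "Psi (p, i, (r, c)) = (r, c(p := take i (c p) @ l # drop i (c p)))" for p i r c
        unfolding Psi_def by simp
      have into: "Psi (p, i, (r, c)) \<in> PTd S d \<and> leafctx S r (c(p := take i (c p) @ l # drop i (c p))) l"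
        if "(p, i, (r, c)) \<in> Sig" for p i r c
      proof -
        have p: "p \<in> S'" "1 \<le> d p" "i < d p" and tc: "istree S' r c" "\<And>v. length (c v) = dp p v"
          using that unfolding Sig_def P_def PTd_def by auto
        have lcp: "length (c p) = d p - 1" using tc(2)[of p] by (simp add: dp_def)
        have il: "i \<le> length (c p)" using lcp p by simp
        let ?n = "c(p := take i (c p) @ l # drop i (c p))"
        have tn: "istree S r ?n" using ins_tree[OF tc(1)[unfolded S'_def] lS p(1)[unfolded S'_def] il] .
        have len: "length (?n v) = d v" for v
        proof (cases "v = p")
          case True
          then show ?thesis using lcp il p by simp
        next
          case False
          then show ?thesis using tc(2)[of v] by (simp add: dp_def)
        qed
        have rS': "r \<in> S'" using tc(1) unfolding istree_def by auto
        have "leafctx S r ?n l"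
        proof
          show "istree S r ?n" by fact
          show "finite S" by fact
          show "l \<in> S" by fact
          show "l \<noteq> r" using rS' by (auto simp: S'_def)
          show "?n l = []" using len[of l] dl by simp
          show "v \<le> l" if "v \<in> S" "?n v = []" for v
            using lmax[OF that(1)] len[of v] that(2) by simp
        qed
        then show ?thesis using tn len by (simp add: Psi_simp PTd_def)
      qed
      have img: "Psi ` Sig = PTd S d"
      proof
        show "Psi ` Sig \<subseteq> PTd S d" using into by auto
        show "PTd S d \<subseteq> Psi ` Sig"
        proof
          fix T assume T: "T \<in> PTd S d"
          then obtain r ch where rc: "T = (r, ch)" "istree S r ch" "\<And>v. length (ch v) = d v"
            unfolding PTd_def by auto
          obtain j where j: "j \<in> S" "j \<noteq> r"
            using c2 rc(2) unfolding istree_def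
            by (metis card_1_singletonE card_le_Suc0_iff_eq finite_subset insertI1 not_less_eq_eq numeral_2_eq_2 fin)
          have "(r, j) \<in> (edges ch)\<^sup>*" using rc(2) j unfolding istree_def by auto
          then obtain c where "(r, c) \<in> edges ch" using j(2) by (metis converse_rtranclE)
          then have "ch r \<noteq> []" by auto
          then have "d r \<noteq> 0" using rc(3)[of r] by (metis length_0_conv)
          then have lr: "l \<noteq> r" using dl by auto
          have lleaf: "ch l = []" using rc(3)[of l] dl by simp
          interpret lc: leafctx S r ch l
          proof
            show "istree S r ch" by fact
            show "finite S" by fact
            show "l \<in> S" by fact
            show "l \<noteq> r" by fact
            show "ch l = []" by fact
            show "v \<le> l" if "v \<in> S" "ch v = []" for v
              using lmax[OF that(1)] rc(3)[of v] that(2) by simp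
          qed
          have "l \<in> S - {r}" using lS lr by simp
          then obtain p where lp: "l \<in> set (ch p)" using rc(2) unfolding istree_def by metis
          then obtain as bs where chp: "ch p = as @ l # bs" by (meson split_list)
          have pS: "p \<in> S" using edge_in(2)[OF rc(2), of p l] lp by simp
          have pl: "p \<noteq> l" using lp lleaf by auto
          have dpp: "d p = length as + length bs + 1" using rc(3)[of p] chp by simp
          let ?c = "rm l ch"
          have tc: "istree S' r ?c" unfolding S'_def using rm_tree[OF rc(2) lleaf lS lr] .
          have lenc: "length (?c v) = dp p v" for v
          proof (cases "v = p")
            case True
            then show ?thesis using lc.rm_p[OF chp] dpp by (simp add: dp_def)
          next
            case False
            then show ?thesis using lc.rm_v[OF lp False] rc(3)[of v] by (simp add: dp_def)
          qed
          have mem: "(p, length as, (r, ?c)) \<in> Sig"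
            unfolding Sig_def P_def PTd_def using tc lenc pS pl dpp by (auto simp: S'_def)
          have "Psi (p, length as, (r, ?c)) = (r, ch)"
          proof -
            have "?c(p := take (length as) (?c p) @ l # drop (length as) (?c p)) = ch"
            proof
              fix v show "(?c(p := take (length as) (?c p) @ l # drop (length as) (?c p))) v = ch v"
                using lc.rm_p[OF chp] lc.rm_v[OF lp] chp by (cases "v = p") auto
            qed
            then show ?thesis by (simp add: Psi_simp)
          qed
          then show "T \<in> Psi ` Sig" using mem rc(1) by force
        qed
      qed
      have inj: "inj_on Psi Sig"
      proof (rule inj_onI)
        fix y1 y2 assume y1: "y1 \<in> Sig" and y2: "y2 \<in> Sig" and eq: "Psi y1 = Psi y2"
        obtain p1 i1 r1 c1 where y1e: "y1 = (p1, i1, (r1, c1))" by (cases y1) auto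
        obtain p2 i2 r2 c2 where y2e: "y2 = (p2, i2, (r2, c2))" by (cases y2) auto
        have t1: "istree S' r1 c1" "p1 \<in> S'" "i1 < d p1" "length (c1 p1) = d p1 - 1"
          using y1 y1e unfolding Sig_def P_def PTd_def dp_def by auto
        have t2: "istree S' r2 c2" "p2 \<in> S'" "i2 < d p2" "length (c2 p2) = d p2 - 1"
          using y2 y2e unfolding Sig_def P_def PTd_def dp_def by auto
        have nl1: "l \<notin> set (c1 v)" for v using t1(1) unfolding istree_def S'_def by blast
        have nl2: "l \<notin> set (c2 v)" for v using t2(1) unfolding istree_def S'_def by blast
        let ?n1 = "c1(p1 := take i1 (c1 p1) @ l # drop i1 (c1 p1))"
        let ?n2 = "c2(p2 := take i2 (c2 p2) @ l # drop i2 (c2 p2))"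
        have rn: "(r1, ?n1) = (r2, ?n2)" using eq unfolding y1e y2e Psi_simp .
        have r: "r1 = r2" using rn by (rule Pair_inject)
        have n: "?n1 = ?n2" using rn by (rule Pair_inject)
        have pp: "p1 = p2"
        proof (rule ccontr)
          assume ne: "p1 \<noteq> p2"
          have "l \<in> set (?n1 p1)" by simp
          then have "l \<in> set (?n2 p1)" using n by metis
          moreover have "?n2 p1 = c2 p1" using ne by simp
          ultimately show False using nl2 by metis
        qed
        have "take i1 (c1 p1) @ l # drop i1 (c1 p1) = take i2 (c2 p1) @ l # drop i2 (c2 p1)"
          using fun_cong[OF n, of p1] pp by (metis fun_upd_same)
        moreover have "l \<notin> set (take i1 (c1 p1))" "l \<notin> set (drop i1 (c1 p1))"
          using nl1[of p1] by (auto dest: in_set_takeD in_set_dropD)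
        ultimately have td: "take i1 (c1 p1) = take i2 (c2 p1)" "drop i1 (c1 p1) = drop i2 (c2 p1)"
          using append_Cons_eq_iff[of l "take i1 (c1 p1)" "drop i1 (c1 p1)"] by simp_all
        then have cp: "c1 p1 = c2 p1" by (metis append_take_drop_id)
        have "i1 \<le> length (c1 p1)" using t1(3,4) by simp
        then have "length (take i1 (c1 p1)) = i1" by simp
        moreover have "i2 \<le> length (c2 p1)" using t2(3,4) pp by simp
        then have "length (take i2 (c2 p1)) = i2" by simp
        ultimately have "i1 = i2" using td(1) by metis
        moreover have "c1 = c2"
        proof
          fix v show "c1 v = c2 v"
          proof (cases "v = p1")
            case True then show ?thesis using cp by simp
          next
            case False then show ?thesis using fun_cong[OF n, of v] pp by simp
          qed
        qed
        ultimately show "y1 = y2" using y1e y2e r pp by simp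
      qed
      have wt: "W x t S (snd (Psi (p, i, T))) = W x t S' (snd T) * f p i"
        if "(p, i, T) \<in> Sig" for p i T
      proof -
        obtain r c where T: "T = (r, c)" by (cases T) auto
        have p: "p \<in> P" "i < d p" and tc: "istree S' r c" "\<And>v. length (c v) = dp p v"
          using that T unfolding Sig_def PTd_def by auto
        have lcp: "length (c p) = d p - 1" using tc(2)[of p] by (simp add: dp_def)
        have lc: "leafctx S r (c(p := take i (c p) @ l # drop i (c p))) l"
          using into[of p i r c] that T by simp
        have w: "W x t S (c(p := take i (c p) @ l # drop i (c p))) =
              W x t (S - {l}) (rm l (c(p := take i (c p) @ l # drop i (c p)))) *
              (if drop i (c p) = [] then x p else t)"
          by (rule leafctx.weight_rm[OF lc]) simp
        have "rm l (c(p := take i (c p) @ l # drop i (c p))) = c"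
          by (rule rm_ins[OF tc(1)[unfolded S'_def]])
        moreover have "(drop i (c p) = []) = (i = d p - 1)" using lcp p by auto
        ultimately show ?thesis using w T by (simp add: Psi_simp f_def S'_def)
      qed
      have finSig: "finite P" "\<And>p. finite {..<d p}" "\<And>p. finite (PTd S' (dp p))"
        using finS' finite_PTd[OF finS'] by (auto simp: P_def)
      have "(\<Sum>T\<in>PTd S d. W x t S (snd T)) = (\<Sum>y\<in>Sig. W x t S (snd (Psi y)))"
        unfolding img[symmetric] by (simp add: sum.reindex[OF inj])
      also have "\<dots> = (\<Sum>(p, i, T)\<in>Sig. W x t S' (snd T) * f p i)"
        by (rule sum.cong) (auto simp: wt)
      also have "\<dots> = (\<Sum>p\<in>P. \<Sum>(i, T)\<in>(SIGMA i:{..<d p}. PTd S' (dp p)). W x t S' (snd T) * f p i)"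
        unfolding Sig_def by (rule sum.Sigma[symmetric]) (use finSig in auto)
      also have "\<dots> = (\<Sum>p\<in>P. \<Sum>i<d p. \<Sum>T\<in>PTd S' (dp p). W x t S' (snd T) * f p i)"
        by (rule sum.cong[OF refl], rule sum.Sigma[symmetric]) (use finSig in auto)
      also have "\<dots> = (\<Sum>p\<in>P. (\<Sum>T\<in>PTd S' (dp p). W x t S' (snd T)) * (\<Sum>i<d p. f p i))"
        by (simp add: sum_distrib_left sum_distrib_right sum.swap[of _ "{..<_}"])
      also have "\<dots> = (\<Sum>p\<in>P. of_nat (CL S' (card S - 2) (dp p)) * R x t S d)"
      proof (rule sum.cong[OF refl])
        fix p assume pP: "p \<in> P"
        have "card S' < card S" using cS' cS by simp
        then have IH: "(\<Sum>T\<in>PTd S' (dp p). W x t S' (snd T)) =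
            of_nat (CL S' (card S' - 1) (dp p)) * R x t S' (dp p)"
          using less.hyps finS' S'ne by blast
        have "(\<Sum>i<d p. f p i) = x p + of_nat (d p - 1) * t"
          unfolding f_def by (rule sum_if_last) (use pP in \<open>simp add: P_def\<close>)
        moreover have "R x t S d = R x t S' (dp p) * (x p + of_nat (d p - 1) * t)"
          unfolding S'_def dp_def by (rule R_rec[where d=d, OF fin lS dl]) (use pP in \<open>auto simp: P_def S'_def\<close>)
        moreover have "card S' - 1 = card S - 2" using cS' by simp
        ultimately show "(\<Sum>T\<in>PTd S' (dp p). W x t S' (snd T)) * (\<Sum>i<d p. f p i) =
            of_nat (CL S' (card S - 2) (dp p)) * R x t S d"
          using IH by (simp add: ac_simps)
      qed
      also have "\<dots> = of_nat (\<Sum>p\<in>P. CL S' (card S - 2) (dp p)) * R x t S d"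
        by (simp add: sum_distrib_right)
      also have "(\<Sum>p\<in>P. CL S' (card S - 2) (dp p)) = CL S (card S - 1) d"
      proof -
        have "card S - 1 = Suc (card S - 2)" using c2 by simp
        then have "CL S (card S - 1) d = (\<Sum>p\<in>{p\<in>S. 1 \<le> d p}. CL S (card S - 2) (dp p))"
          using CL_rec[OF fin, of "card S - 2" d] by (simp add: dp_def)
        also have "{p\<in>S. 1 \<le> d p} = P" using dl by (auto simp: P_def S'_def)
        also have "(\<Sum>p\<in>P. CL S (card S - 2) (dp p)) = (\<Sum>p\<in>P. CL S' (card S - 2) (dp p))"
          by (rule sum.cong[OF refl]) (auto simp: S'_def dp_def P_def dl intro!: CL_remove)
        finally show ?thesis by simp
      qed
      finally show ?thesis .
    qed
  qed
qed


lemma R_inc: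
  fixes x :: "nat \<Rightarrow> 'a::comm_ring_1"
  assumes "finite S" "p \<in> S"
  shows "R x t S (d(p := d p + 1)) = R x t S d * (x p + of_nat (d p) * t)"
proof -
  let ?g = "\<lambda>v. rf t (x v) (d v)"
  let ?h = "\<lambda>v. rf t (x v) ((d(p := d p + 1)) v)"
  have "R x t S (d(p := d p + 1)) = ?h p * prod ?h (S - {p})"
    unfolding R_def by (rule prod.remove[OF assms])
  moreover have "R x t S d = ?g p * prod ?g (S - {p})"
    unfolding R_def by (rule prod.remove[OF assms])
  moreover have "prod ?h (S - {p}) = prod ?g (S - {p})" by (rule prod.cong) auto
  moreover have "?h p = ?g p * (x p + of_nat (d p) * t)" by (simp add: rf_def)
  ultimately show ?thesis by (simp only: ac_simps)
qed

lemma list_sum: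
  fixes x :: "nat \<Rightarrow> 'a::comm_ring_1"
  assumes fin: "finite S"
  shows "(\<Sum>s\<in>{s. set s \<subseteq> S \<and> length s = m}. R x t S (count_list s)) = rf t (\<Sum>v\<in>S. x v) m"
proof (induction m)
  case 0
  have "{s. set s \<subseteq> S \<and> length s = 0} = {[]}" by auto
  then show ?case by (simp add: R_def rf_def)
next
  case (Suc m)
  let ?A = "{s. set s \<subseteq> S \<and> length s = m}"
  have inj: "inj_on (\<lambda>(xs, n). n # xs) (?A \<times> S)" by (auto simp: inj_on_def)
  have cnt: "count_list (p # s) = (count_list s)(p := count_list s p + 1)" for p s
    by (auto simp: fun_eq_iff)
  have "(\<Sum>s\<in>{s. set s \<subseteq> S \<and> length s = Suc m}. R x t S (count_list s))
      = (\<Sum>(s, p)\<in>?A \<times> S. R x t S (count_list (p # s)))"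
    unfolding lists_length_Suc_eq by (subst sum.reindex[OF inj]) (simp add: comp_def case_prod_beta')
  also have "\<dots> = (\<Sum>s\<in>?A. \<Sum>p\<in>S. R x t S (count_list (p # s)))"
    by (rule sum.cartesian_product[symmetric])
  also have "\<dots> = (\<Sum>s\<in>?A. R x t S (count_list s) * ((\<Sum>v\<in>S. x v) + of_nat m * t))"
  proof (rule sum.cong[OF refl])
    fix s assume s: "s \<in> ?A"
    have "(\<Sum>p\<in>S. R x t S (count_list (p # s))) =
        (\<Sum>p\<in>S. R x t S (count_list s) * (x p + of_nat (count_list s p) * t))"
    proof (rule sum.cong[OF refl])
      fix p assume "p \<in> S"
      show "R x t S (count_list (p # s)) = R x t S (count_list s) * (x p + of_nat (count_list s p) * t)"
        unfolding cnt by (rule R_inc[OF fin \<open>p \<in> S\<close>])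
    qed
    also have "\<dots> = R x t S (count_list s) * ((\<Sum>p\<in>S. x p) + of_nat (\<Sum>p\<in>S. count_list s p) * t)"
      by (simp add: sum_distrib_left sum.distrib sum_distrib_right algebra_simps)
    also have "(\<Sum>p\<in>S. count_list s p) = m" using count_sum[of s S] s fin by simp
    finally show "(\<Sum>p\<in>S. R x t S (count_list (p # s))) =
        R x t S (count_list s) * ((\<Sum>v\<in>S. x v) + of_nat m * t)" .
  qed
  also have "\<dots> = (\<Sum>s\<in>?A. R x t S (count_list s)) * ((\<Sum>v\<in>S. x v) + of_nat m * t)"
    by (rule sum_distrib_right[symmetric])
  also have "\<dots> = rf t (\<Sum>v\<in>S. x v) m * ((\<Sum>v\<in>S. x v) + of_nat m * t)"
    unfolding Suc ..
  also have "\<dots> = rf t (\<Sum>v\<in>S. x v) (Suc m)" by (simp add: rf_def)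
  finally show ?case .
qed

theorem theorem4p3:
  fixes n :: nat and x :: "nat \<Rightarrow> 'a::comm_ring_1" and t :: 'a
  assumes "n \<ge> 1"
  shows "(\<Sum>(r, ch)\<in>plane_trees n. t ^ eld n ch * (\<Prod>i=1..n. x i ^ young_v ch i))
         = (\<Prod>k\<in>{0..<n-1}. (\<Sum>i=1..n. x i) + of_nat k * t)"
proof -
  let ?S = "{1..n}"
  let ?PT = "{(r, ch). istree ?S r ch}"
  let ?Lst = "{s. set s \<subseteq> ?S \<and> length s = n - 1}"
  let ?deg = "\<lambda>T::nat \<times> (nat \<Rightarrow> nat list). (\<lambda>v. length (snd T v))"
  let ?D = "?deg ` ?PT \<union> count_list ` ?Lst"
  have fS: "finite ?S" by simp
  have Sne: "?S \<noteq> {}" using assms by simp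
  have cS: "card ?S = n" by simp
  have fPT: "finite ?PT" by (rule finite_PT[OF fS])
  have fL: "finite ?Lst" by (rule finite_lists_length_eq[OF fS])
  have fD: "finite ?D" using fPT fL by simp
  have e: "is_plane_tree n = istree ?S" by (rule ext)+ (rule is_plane_tree_istree)
  have pt: "plane_trees n = ?PT" unfolding plane_trees_def e by (rule refl)
  have w: "t ^ eld n ch * (\<Prod>i=1..n. x i ^ young_v ch i) = W x t ?S ch" for ch
    unfolding W_def eld_def by (simp add: power_sum prod.distrib)
  have "(\<Sum>(r, ch)\<in>plane_trees n. t ^ eld n ch * (\<Prod>i=1..n. x i ^ young_v ch i))
      = (\<Sum>T\<in>?PT. W x t ?S (snd T))"
    unfolding pt
  proof (rule sum.cong[OF refl])
    fix T :: "nat \<times> (nat \<Rightarrow> nat list)"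
    obtain r ch where T: "T = (r, ch)" by (cases T)
    show "(case T of (r, ch) \<Rightarrow> t ^ eld n ch * (\<Prod>i=1..n. x i ^ young_v ch i)) = W x t ?S (snd T)"
      unfolding T case_prod_conv snd_conv by (rule w)
  qed
  also have "\<dots> = (\<Sum>d\<in>?D. \<Sum>T\<in>{T \<in> ?PT. ?deg T = d}. W x t ?S (snd T))"
    by (rule sum.group[symmetric]) (use fPT fD in auto)
  also have "\<dots> = (\<Sum>d\<in>?D. of_nat (CL ?S (n - 1) d) * R x t ?S d)"
  proof (rule sum.cong[OF refl])
    fix d
    have "{T \<in> ?PT. ?deg T = d} = PTd ?S d" by (auto simp: PTd_def fun_eq_iff)
    then show "(\<Sum>T\<in>{T \<in> ?PT. ?deg T = d}. W x t ?S (snd T)) = of_nat (CL ?S (n - 1) d) * R x t ?S d"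
      using main_d[OF fS Sne, of x t d] cS by simp
  qed
  also have "\<dots> = (\<Sum>d\<in>?D. \<Sum>s\<in>{s \<in> ?Lst. count_list s = d}. R x t ?S (count_list s))"
  proof (rule sum.cong[OF refl])
    fix d
    have "(\<Sum>s\<in>{s \<in> ?Lst. count_list s = d}. R x t ?S (count_list s))
        = (\<Sum>s\<in>{s \<in> ?Lst. count_list s = d}. R x t ?S d)" by (rule sum.cong) auto
    also have "\<dots> = of_nat (CL ?S (n - 1) d) * R x t ?S d"
      by (simp add: CL_def conj_assoc)
    finally show "of_nat (CL ?S (n - 1) d) * R x t ?S d =
        (\<Sum>s\<in>{s \<in> ?Lst. count_list s = d}. R x t ?S (count_list s))" by simp
  qed
  also have "\<dots> = (\<Sum>s\<in>?Lst. R x t ?S (count_list s))"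
    by (rule sum.group) (use fL fD in auto)
  also have "\<dots> = rf t (\<Sum>i=1..n. x i) (n - 1)" by (rule list_sum[OF fS])
  also have "\<dots> = (\<Prod>k\<in>{0..<n-1}. (\<Sum>i=1..n. x i) + of_nat k * t)"
    unfolding rf_def by (simp add: atLeast0LessThan)
  finally show ?thesis .
qed

end
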